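(* Let $Q=(q_n)_{n\ge1}$ be a basic sequence that is infinite in limit, and suppose there exist constants $M$ and $t$ such that $\nu_{i+1}-\nu_i\le Mi$ for all $i>t$. Then $l_i\le\lceil M+1\rceil$ for all $i>t$.
   Context: A basic sequence is a sequence $Q=(q_n)_{n\ge1}$ of integers with $q_n\ge 2$; it is infinite in limit if $q_n\to\infty$. $\mathbb{N}$ denotes the positive integers. For each positive integer $j$ let $\nu_j=\min\{N : q_m\ge 2j^2 \text{ for all } m\ge N\}$. Define $l_1=\max(\nu_2-1,1)$ and, recursively for $i\ge 2$, $l_i=\max\big(\min\{k\in\mathbb{N} : l_1+2l_2+\cdots+(i-1)l_{i-1}+ik\ge \nu_{i+1}-1\},1\big)$. *)

theory Defs
  imports Complex_Main
begin

(* A basic sequence q is indexed from 1: q 1, q 2, ...; the value q 0 is irrelevant. *)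

definition nu :: "(nat \<Rightarrow> int) \<Rightarrow> nat \<Rightarrow> nat" where
  "nu q j = (LEAST N. N \<ge> 1 \<and> (\<forall>m\<ge>N. q m \<ge> 2 * int j ^ 2))"

(* lS q i = (l_i, l_1 + 2 l_2 + ... + i l_i) for i >= 1 *)
fun lS :: "(nat \<Rightarrow> int) \<Rightarrow> nat \<Rightarrow> nat \<times> nat" where
  "lS q 0 = (0, 0)"
| "lS q (Suc 0) = (let k = max (nu q 2 - 1) 1 in (k, k))"
| "lS q (Suc (Suc i)) =
     (let S = snd (lS q (Suc i)); n = Suc (Suc i);
          k = max (LEAST k::nat. k \<ge> 1 \<and> int S + int n * int k \<ge> int (nu q (n + 1)) - 1) 1
      in (k, S + n * k))"

definition l :: "(nat \<Rightarrow> int) \<Rightarrow> nat \<Rightarrow> nat" where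
  "l q i = fst (lS q i)"

end

theory Submission
  imports Defs
begin

lemma nu_prop:
  assumes "filterlim q at_top sequentially"
  shows "nu q j \<ge> 1 \<and> (\<forall>m\<ge>nu q j. q m \<ge> 2 * int j ^ 2)"
proof -
  have "eventually (\<lambda>m. q m \<ge> 2 * int j ^ 2) sequentially"
    using assms filterlim_at_top by blast
  then obtain N where N: "\<forall>m\<ge>N. q m \<ge> 2 * int j ^ 2" by (auto simp: eventually_sequentially)
  have "\<exists>N. N \<ge> 1 \<and> (\<forall>m\<ge>N. q m \<ge> 2 * int j ^ 2)"
    using N by (intro exI[of _ "max N 1"]) auto
  then show ?thesis unfolding nu_def by (rule LeastI_ex)
qed

lemma nu_mono:
  assumes "filterlim q at_top sequentially"
  shows "nu q j \<le> nu q (Suc j)"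
proof -
  have p: "nu q (Suc j) \<ge> 1 \<and> (\<forall>m\<ge>nu q (Suc j). q m \<ge> 2 * int (Suc j) ^ 2)"
    using nu_prop[OF assms] by blast
  have "2 * int j ^ 2 \<le> 2 * int (Suc j) ^ 2" by (simp add: power_mono)
  with p have "nu q (Suc j) \<ge> 1 \<and> (\<forall>m\<ge>nu q (Suc j). q m \<ge> 2 * int j ^ 2)"
    by (meson order_trans)
  then show ?thesis unfolding nu_def by (rule Least_le)
qed

lemma nu_one:
  assumes "\<forall>n\<ge>1. q n \<ge> 2"
  shows "nu q 1 = 1"
  unfolding nu_def
  by (rule Least_equality) (use assms in auto)

lemma S_inv:
  assumes "filterlim q at_top sequentially"
  shows "int (snd (lS q (Suc i))) \<ge> int (nu q (Suc i + 1)) - 1"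
proof (induction i)
  case 0
  have "int (nu q 2) - 1 \<le> int (max (nu q 2 - 1) 1)" by linarith
  then show ?case by (simp add: Let_def numeral_2_eq_2)
next
  case (Suc i)
  define S where "S = snd (lS q (Suc i))"
  define n where "n = Suc (Suc i)"
  define P where "P = (\<lambda>k::nat. k \<ge> 1 \<and> int S + int n * int k \<ge> int (nu q (n + 1)) - 1)"
  have "P (nu q (n+1) + 1)" unfolding P_def n_def
    by (simp add: algebra_simps)
  hence PL: "P (LEAST k. P k)" by (rule LeastI)
  define k where "k = max (LEAST k. P k) 1"
  have "int n * int (LEAST k. P k) \<le> int n * int k" unfolding k_def
    by (intro mult_left_mono) auto
  with PL have "int S + int n * int k \<ge> int (nu q (n + 1)) - 1" unfolding P_def by linarith
  moreover have "lS q (Suc (Suc i)) = (k, S + n * k)"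
    unfolding S_def n_def k_def P_def by (simp add: Let_def)
  ultimately have "int (snd (lS q (Suc (Suc i)))) \<ge> int (nu q (n + 1)) - 1"
    by (simp only: snd_conv of_nat_add of_nat_mult)
  then show ?case unfolding n_def by simp
qed

theorem mainTheorem17:
  fixes q :: "nat \<Rightarrow> int" and M t :: real
  assumes basic: "\<forall>n\<ge>1. q n \<ge> 2"
    and infinite_in_limit: "filterlim q at_top sequentially"
    and gap: "\<forall>i::nat. i \<ge> 1 \<and> real i > t \<longrightarrow>
                real (nu q (i + 1)) - real (nu q i) \<le> M * real i"
  shows "\<forall>i::nat. i \<ge> 1 \<and> real i > t \<longrightarrow> real (l q i) \<le> real_of_int \<lceil>M + 1\<rceil>"
proof (intro allI impI)
  fix i :: nat
  assume i: "i \<ge> 1 \<and> real i > t"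
  have g: "real (nu q (i + 1)) - real (nu q i) \<le> M * real i" using gap i by blast
  have "nu q i \<le> nu q (i+1)" using nu_mono[OF infinite_in_limit] by simp
  hence "M * real i \<ge> 0" using g by linarith
  hence M0: "M \<ge> 0" using i by (simp add: zero_le_mult_iff)
  show "real (l q i) \<le> real_of_int \<lceil>M + 1\<rceil>"
  proof (cases "i = 1")
    case True
    have "real (nu q 2) - 1 \<le> M" using g True nu_one[OF basic] by (simp add: numeral_2_eq_2)
    moreover have "M \<le> real_of_int \<lceil>M\<rceil>" by (rule le_of_int_ceiling)
    moreover have "real_of_int \<lceil>M\<rceil> \<ge> 0" using M0 by simp
    ultimately have "real (nu q 2) - 1 \<le> real_of_int \<lceil>M\<rceil>" "real_of_int \<lceil>M\<rceil> \<ge> 0" by linarith+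
    hence "real (max (nu q 2 - 1) 1) \<le> real_of_int \<lceil>M\<rceil> + 1" by (auto simp: max_def of_nat_diff)
    then show ?thesis using True
      by (simp add: l_def Let_def numeral_2_eq_2)
  next
    case False
    then obtain j where ij: "i = Suc (Suc j)" using i by (cases i; cases "i - 1") auto
    define S where "S = snd (lS q (Suc j))"
    have Sge: "int S \<ge> int (nu q i) - 1" using S_inv[OF infinite_in_limit, of j] ij S_def by simp
    define P where "P = (\<lambda>k::nat. k \<ge> 1 \<and> int S + int i * int k \<ge> int (nu q (i + 1)) - 1)"
    define k0 where "k0 = nat \<lceil>M\<rceil> + 1"
    have k0r: "real k0 = real_of_int \<lceil>M\<rceil> + 1" using M0 unfolding k0_def by simp
    have "real i * M \<le> real i * real k0"
      using k0r le_of_int_ceiling[of M] by (intro mult_left_mono) linarith+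
    hence "real S + real i * real k0 \<ge> real (nu q (i + 1)) - 1"
      using Sge g by (simp add: algebra_simps)
    hence "real_of_int (int (nu q (i + 1)) - 1) \<le> real_of_int (int S + int i * int k0)" by simp
    hence "int (nu q (i + 1)) - 1 \<le> int S + int i * int k0" by (simp only: of_int_le_iff)
    hence "P k0" unfolding P_def k0_def by simp
    hence L: "(LEAST k. P k) \<le> k0" by (rule Least_le)
    have "l q i = max (LEAST k. P k) 1"
      unfolding l_def ij P_def S_def by (simp add: Let_def)
    hence "l q i \<le> k0" using L unfolding k0_def by simp
    hence "real (l q i) \<le> real k0" by simp
    thus ?thesis using k0r by simp
  qed
qed

end
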